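(* Let $\delta\le\frac14$ and let $\mathcal{I}$ be a $\delta$-ONI instance with $n$ agents and $|N^1_1|\le n\left(\frac14-\delta\right)/\left(\frac14+\frac\delta3\right)$. Then every agent $i\in N^1_1$ receives a bag of value at least $\left(\frac34+\delta\right)\mathrm{MMS}_i$ at the end of Algorithm $\mathtt{approxMMS1}(\mathcal{I},\delta)$.
   Context: Instance: agents $[n]$, goods $[m]$, additive valuations; goods with index larger than $m$ are dummy goods of value 0; $\mathrm{MMS}_i$ is the max over partitions of the goods into $n$ bundles of the minimum bundle value for $i$. Ordered: $v_i(1)\ge\dots\ge v_i(m)$ for all $i$. Normalized: every agent $i$ has an MMS partition with all $n$ bundles of value exactly 1 to $i$. $\alpha$-irreducible: for every $i$, $v_i(1)<\alpha$, $v_i(\{2n-1,2n,2n+1\})<\alpha$, $v_i(\{3n-2,\dots,3n+1\})<\alpha$, $v_i(\{1,2n+1\})<\alpha$. $\delta$-ONI: ordered, normalized, $(3/4+\delta)$-irreducible. $B_k=\{k,2n-k+1\}$ ($k\in[n]$); $N^1=\{i:v_i(B_k)\le1\ \forall k\}$; $N^1_1=\{i\in N^1:v_i(2n+1)\ge\frac14-5\delta\}$. Algorithm $\mathtt{approxMMS1}(\mathcal{I},\delta)$: $\alpha=3/4+\delta$, bags $B_1,\dots,B_n$. Phase 1: while some unassigned agent $i$ and unassigned bag $B$ have $v_i(B)\ge\alpha$, assign such $B$ to an agent valuing it at least $\alpha$, choosing an agent of $N^1_1$ whenever one qualifies. Phase 2: process remaining bags one by one; for the current bag $B$, while no unassigned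 agent values it at least $\alpha$, add an arbitrary unused good with index $>2n$; then assign $B$ to an unassigned agent valuing it at least $\alpha$, preferring $N^1_1$. (If a good must be added but none is left, the algorithm stops.) *)

theory Defs
  imports Complex_Main
begin

text \<open>Agents are 1..n, real goods are 1..m; goods with index > m are dummy goods.
  A valuation profile is v :: nat => nat => real, v i g = value of good g for agent i.\<close>

definition bval :: "(nat \<Rightarrow> nat \<Rightarrow> real) \<Rightarrow> nat \<Rightarrow> nat set \<Rightarrow> real" where
  "bval v i S = (\<Sum>g\<in>S. v i g)"

definition agents :: "nat \<Rightarrow> nat set" where
  "agents n = {1..n}"

definition goods :: "nat \<Rightarrow> nat set" where
  "goods m = {1..m}"

definition is_partition :: "nat \<Rightarrow> nat \<Rightarrow> (nat \<Rightarrow> nat set) \<Rightarrow> bool" where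
  "is_partition n m P \<longleftrightarrow>
     (\<Union>j\<in>{1..n}. P j) = goods m \<and>
     (\<forall>j\<in>{1..n}. \<forall>j'\<in>{1..n}. j \<noteq> j' \<longrightarrow> P j \<inter> P j' = {})"

definition min_bundle :: "(nat \<Rightarrow> nat \<Rightarrow> real) \<Rightarrow> nat \<Rightarrow> nat \<Rightarrow> (nat \<Rightarrow> nat set) \<Rightarrow> real" where
  "min_bundle v n i P = Min ((\<lambda>j. bval v i (P j)) ` {1..n})"

definition MMS :: "(nat \<Rightarrow> nat \<Rightarrow> real) \<Rightarrow> nat \<Rightarrow> nat \<Rightarrow> nat \<Rightarrow> real" where
  "MMS v n m i = Max {min_bundle v n i P | P. is_partition n m P}"

definition additive_inst :: "(nat \<Rightarrow> nat \<Rightarrow> real) \<Rightarrow> nat \<Rightarrow> nat \<Rightarrow> bool" where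
  "additive_inst v n m \<longleftrightarrow> (\<forall>i\<in>agents n. \<forall>g. v i g \<ge> 0 \<and> (g > m \<longrightarrow> v i g = 0))"

definition ordered :: "(nat \<Rightarrow> nat \<Rightarrow> real) \<Rightarrow> nat \<Rightarrow> nat \<Rightarrow> bool" where
  "ordered v n m \<longleftrightarrow> (\<forall>i\<in>agents n. \<forall>g\<in>goods m. \<forall>g'\<in>goods m. g \<le> g' \<longrightarrow> v i g \<ge> v i g')"

definition normalized :: "(nat \<Rightarrow> nat \<Rightarrow> real) \<Rightarrow> nat \<Rightarrow> nat \<Rightarrow> bool" where
  "normalized v n m \<longleftrightarrow> (\<forall>i\<in>agents n. \<exists>P. is_partition n m P \<and>
      min_bundle v n i P = MMS v n m i \<and> (\<forall>j\<in>{1..n}. bval v i (P j) = 1))"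

definition irreducible :: "real \<Rightarrow> (nat \<Rightarrow> nat \<Rightarrow> real) \<Rightarrow> nat \<Rightarrow> bool" where
  "irreducible \<alpha> v n \<longleftrightarrow> (\<forall>i\<in>agents n.
      v i 1 < \<alpha> \<and>
      bval v i {2*n-1, 2*n, 2*n+1} < \<alpha> \<and>
      bval v i {3*n-2..3*n+1} < \<alpha> \<and>
      bval v i {1, 2*n+1} < \<alpha>)"

definition ONI :: "real \<Rightarrow> (nat \<Rightarrow> nat \<Rightarrow> real) \<Rightarrow> nat \<Rightarrow> nat \<Rightarrow> bool" where
  "ONI \<delta> v n m \<longleftrightarrow> additive_inst v n m \<and> ordered v n m \<and> normalized v n m \<and>
      irreducible (3/4 + \<delta>) v n"

definition initbag :: "nat \<Rightarrow> nat \<Rightarrow> nat set" where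
  "initbag n k = {k, 2*n - k + 1}"

definition N1 :: "(nat \<Rightarrow> nat \<Rightarrow> real) \<Rightarrow> nat \<Rightarrow> nat set" where
  "N1 v n = {i\<in>agents n. \<forall>k\<in>{1..n}. bval v i (initbag n k) \<le> 1}"

definition N11 :: "(nat \<Rightarrow> nat \<Rightarrow> real) \<Rightarrow> nat \<Rightarrow> real \<Rightarrow> nat set" where
  "N11 v n \<delta> = {i\<in>N1 v n. v i (2*n+1) \<ge> 1/4 - 5*\<delta>}"

text \<open>State of algorithm approxMMS1: phase (1 or 2), assignment of bags to agents,
  current contents of each bag (indexed 1..n), indices of unassigned bags, the bag currently
  processed in phase 2, and the pool of unused goods with index > 2n.\<close>

record st =
  ph :: nat
  asg :: "nat \<Rightarrow> nat set option"
  bag :: "nat \<Rightarrow> nat set"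
  rem :: "nat set"
  cur :: "nat option"
  pool :: "nat set"

definition init_st :: "nat \<Rightarrow> nat \<Rightarrow> st" where
  "init_st n m = \<lparr>ph = 1, asg = (\<lambda>_. None), bag = initbag n, rem = {1..n}, cur = None,
                 pool = {2*n+1..m}\<rparr>"

inductive alg_step :: "(nat \<Rightarrow> nat \<Rightarrow> real) \<Rightarrow> nat \<Rightarrow> real \<Rightarrow> st \<Rightarrow> st \<Rightarrow> bool"
  for v n \<delta> where
  p1_assign: "\<lbrakk> ph s = 1; i \<in> agents n; asg s i = None; k \<in> rem s;
      bval v i (bag s k) \<ge> 3/4 + \<delta>;
      (\<exists>j\<in>N11 v n \<delta>. asg s j = None \<and> bval v j (bag s k) \<ge> 3/4 + \<delta>) \<longrightarrow> i \<in> N11 v n \<delta> \<rbrakk>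
    \<Longrightarrow> alg_step v n \<delta> s (s\<lparr>asg := (asg s)(i := Some (bag s k)), rem := rem s - {k}\<rparr>)"
| p1_end: "\<lbrakk> ph s = 1;
      \<not> (\<exists>i\<in>agents n. \<exists>k\<in>rem s. asg s i = None \<and> bval v i (bag s k) \<ge> 3/4 + \<delta>) \<rbrakk>
    \<Longrightarrow> alg_step v n \<delta> s (s\<lparr>ph := 2\<rparr>)"
| p2_select: "\<lbrakk> ph s = 2; cur s = None; k \<in> rem s \<rbrakk>
    \<Longrightarrow> alg_step v n \<delta> s (s\<lparr>cur := Some k\<rparr>)"
| p2_add: "\<lbrakk> ph s = 2; cur s = Some k;
      \<not> (\<exists>i\<in>agents n. asg s i = None \<and> bval v i (bag s k) \<ge> 3/4 + \<delta>); g \<in> pool s \<rbrakk>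
    \<Longrightarrow> alg_step v n \<delta> s (s\<lparr>bag := (bag s)(k := bag s k \<union> {g}), pool := pool s - {g}\<rparr>)"
| p2_assign: "\<lbrakk> ph s = 2; cur s = Some k; i \<in> agents n; asg s i = None;
      bval v i (bag s k) \<ge> 3/4 + \<delta>;
      (\<exists>j\<in>N11 v n \<delta>. asg s j = None \<and> bval v j (bag s k) \<ge> 3/4 + \<delta>) \<longrightarrow> i \<in> N11 v n \<delta> \<rbrakk>
    \<Longrightarrow> alg_step v n \<delta> s (s\<lparr>asg := (asg s)(i := Some (bag s k)), rem := rem s - {k},
                              cur := None\<rparr>)"

definition final_state :: "(nat \<Rightarrow> nat \<Rightarrow> real) \<Rightarrow> nat \<Rightarrow> nat \<Rightarrow> real \<Rightarrow> st \<Rightarrow> bool" where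
  "final_state v n m \<delta> s \<longleftrightarrow>
     (alg_step v n \<delta>)\<^sup>*\<^sup>* (init_st n m) s \<and> \<not> (\<exists>s'. alg_step v n \<delta> s s')"

end

theory Submission imports Defs begin

definition UU :: "nat \<Rightarrow> nat \<Rightarrow> nat set" where
  "UU n m = {1..2*n} \<union> {2*n+1..m}"

definition inv_i :: "(nat\<Rightarrow>nat\<Rightarrow>real) \<Rightarrow> nat \<Rightarrow> nat \<Rightarrow> real \<Rightarrow> nat \<Rightarrow> st \<Rightarrow> bool" where
  "inv_i v n m \<delta> i s \<longleftrightarrow>
    (ph s = 1 \<or> ph s = 2) \<and>
    (ph s = 1 \<longrightarrow> cur s = None) \<and>
    (\<forall>k. cur s = Some k \<longrightarrow> k \<in> rem s) \<and>
    rem s \<subseteq> {1..n} \<and>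
    pool s \<subseteq> {2*n+1..m} \<and>
    (\<forall>k\<in>{1..n}. \<forall>k'\<in>{1..n}. k \<noteq> k' \<longrightarrow> bag s k \<inter> bag s k' = {}) \<and>
    (\<forall>k\<in>{1..n}. bag s k \<inter> pool s = {}) \<and>
    (\<Union>k\<in>{1..n}. bag s k) \<union> pool s = UU n m \<and>
    card {j\<in>agents n. asg s j = None} = card (rem s) \<and>
    (\<forall>k\<in>{1..n}. bval v i (bag s k) \<le> max 1 (3/4+\<delta> + v i (2*n+1))) \<and>
    (ph s = 2 \<longrightarrow> (\<forall>k\<in>rem s. cur s \<noteq> Some k \<longrightarrow> bval v i (bag s k) < 3/4+\<delta>)) \<and>
    card {k\<in>{1..n} - rem s. 3/4+\<delta> \<le> bval v i (bag s k)} \<le> card {j\<in>N11 v n \<delta>. asg s j \<noteq> None}"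

lemma union_initbag: "(\<Union>k\<in>{1..n}. initbag n k) = {1..2*n}"
proof
  show "(\<Union>k\<in>{1..n}. initbag n k) \<subseteq> {1..2*n}" by (auto simp: initbag_def)
  show "{1..2*n} \<subseteq> (\<Union>k\<in>{1..n}. initbag n k)"
  proof
    fix x assume x: "x \<in> {1..2*n}"
    show "x \<in> (\<Union>k\<in>{1..n}. initbag n k)"
    proof (cases "x \<le> n")
      case True then show ?thesis using x by (auto simp: initbag_def)
    next
      case False
      then have "2*n+1-x \<in> {1..n}" "x = 2*n - (2*n+1-x) + 1" using x by auto
      then show ?thesis unfolding initbag_def by blast
    qed
  qed
qed

lemma inv_init:
  assumes "i \<in> N1 v n"
  shows "inv_i v n m \<delta> i (init_st n m)"
proof -
  have "{j\<in>agents n. True} = {1..n}" unfolding agents_def by auto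
  then have cardA: "card {j\<in>agents n. True} = n" by (simp only: card_atLeastAtMost)
  have cA: "card (agents n) = n" by (simp only: agents_def card_atLeastAtMost)
  have U: "(\<Union>k\<in>{1..n}. initbag n k) \<union> {2*n+1..m} = UU n m"
    unfolding UU_def union_initbag ..
  have b: "\<forall>k\<in>{1..n}. bval v i (initbag n k) \<le> 1" using assms by (auto simp: N1_def)
  show ?thesis
  unfolding inv_i_def init_st_def st.simps
  apply (intro conjI)
  apply (simp_all only: U cardA)
  using b cA by (auto simp: initbag_def)
qed

lemma asg_back:
  assumes "alg_step v n \<delta> s s'" "asg s' i = None"
  shows "asg s i = None"
  using assms by (cases rule: alg_step.cases) (auto split: if_splits)

lemma assign_card1:
  fixes g :: "nat \<Rightarrow> nat set option"
  assumes "a \<in> agents n" "g a = None" "k \<in> R" "finite R"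
    "card {j\<in>agents n. g j = None} = card R"
  shows "card {j\<in>agents n. (g(a := Some B)) j = None} = card (R - {k})"
proof -
  have "{j\<in>agents n. (g(a := Some B)) j = None} = {j\<in>agents n. g j = None} - {a}" by auto
  moreover have "finite {j\<in>agents n. g j = None}" by (simp add: agents_def)
  ultimately show ?thesis using assms by simp
qed

lemma assign_card2:
  fixes g :: "nat \<Rightarrow> nat set option" and f :: "nat \<Rightarrow> real"
  assumes "g a = None" "k \<in> R" "finite N"
    "card {k\<in>{1..n} - R. \<alpha> \<le> f k} \<le> card {j\<in>N. g j \<noteq> None}"
    "\<alpha> \<le> f k \<longrightarrow> a \<in> N"
  shows "card {k'\<in>{1..n} - (R - {k}). \<alpha> \<le> f k'} \<le> card {j\<in>N. (g(a := Some B)) j \<noteq> None}"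
proof (cases "\<alpha> \<le> f k \<and> k \<in> {1..n}")
  case True
  then have aN: "a \<in> N" using assms by auto
  have e1: "{k'\<in>{1..n} - (R - {k}). \<alpha> \<le> f k'} = insert k {k\<in>{1..n} - R. \<alpha> \<le> f k}"
    using True assms by auto
  have e2: "{j\<in>N. (g(a := Some B)) j \<noteq> None} = insert a {j\<in>N. g j \<noteq> None}"
    using aN by auto
  have "card (insert k {k\<in>{1..n} - R. \<alpha> \<le> f k}) = Suc (card {k\<in>{1..n} - R. \<alpha> \<le> f k})"
    using assms by (intro card_insert_disjoint) auto
  moreover have "card (insert a {j\<in>N. g j \<noteq> None}) = Suc (card {j\<in>N. g j \<noteq> None})"
    using assms by (intro card_insert_disjoint) auto
  ultimately show ?thesis using e1 e2 assms by simp
next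
  case False
  then have e1: "{k'\<in>{1..n} - (R - {k}). \<alpha> \<le> f k'} = {k\<in>{1..n} - R. \<alpha> \<le> f k}"
    using assms by auto
  have "{j\<in>N. g j \<noteq> None} \<subseteq> {j\<in>N. (g(a := Some B)) j \<noteq> None}" by auto
  then have "card {j\<in>N. g j \<noteq> None} \<le> card {j\<in>N. (g(a := Some B)) j \<noteq> None}"
    using assms by (intro card_mono) auto
  then show ?thesis using e1 assms by simp
qed

lemma inv_step:
  assumes st: "alg_step v n \<delta> s s'" and I: "inv_i v n m \<delta> i s" and ai: "asg s' i = None"
    and iN: "i \<in> N11 v n \<delta>" and ord: "ordered v n m" and add: "additive_inst v n m"
  shows "inv_i v n m \<delta> i s'"
proof -
  have ai0: "asg s i = None" using asg_back[OF st ai] .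
  have iA: "i \<in> agents n" using iN by (auto simp: N11_def N1_def)
  have finN: "finite (N11 v n \<delta>)"
    by (rule finite_subset[of _ "agents n"]) (auto simp: N11_def N1_def agents_def)
  have finR: "finite (rem s)" using I by (auto simp: inv_i_def intro: finite_subset)
  have I1: "ph s = 1 \<or> ph s = 2" using I unfolding inv_i_def by (elim conjE) assumption
  have I2: "ph s = 1 \<longrightarrow> cur s = None" using I unfolding inv_i_def by (elim conjE) assumption
  have I3: "\<forall>k. cur s = Some k \<longrightarrow> k \<in> rem s" using I unfolding inv_i_def by (elim conjE) assumption
  have I4: "rem s \<subseteq> {1..n}" using I unfolding inv_i_def by (elim conjE) assumption
  have I5: "pool s \<subseteq> {2*n+1..m}" using I unfolding inv_i_def by (elim conjE) assumption
  have I6: "\<forall>k\<in>{1..n}. \<forall>k'\<in>{1..n}. k \<noteq> k' \<longrightarrow> bag s k \<inter> bag s k' = {}" using I unfolding inv_i_def by (elim conjE) assumption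
  have I7: "\<forall>k\<in>{1..n}. bag s k \<inter> pool s = {}" using I unfolding inv_i_def by (elim conjE) assumption
  have I8: "(\<Union>k\<in>{1..n}. bag s k) \<union> pool s = UU n m" using I unfolding inv_i_def by (elim conjE) assumption
  have I9: "card {j\<in>agents n. asg s j = None} = card (rem s)" using I unfolding inv_i_def by (elim conjE) assumption
  have I10: "\<forall>k\<in>{1..n}. bval v i (bag s k) \<le> max 1 (3/4+\<delta> + v i (2*n+1))" using I unfolding inv_i_def by (elim conjE) assumption
  have I11: "ph s = 2 \<longrightarrow> (\<forall>k\<in>rem s. cur s \<noteq> Some k \<longrightarrow> bval v i (bag s k) < 3/4+\<delta>)" using I unfolding inv_i_def by (elim conjE) assumption
  have I12: "card {k\<in>{1..n} - rem s. 3/4+\<delta> \<le> bval v i (bag s k)} \<le> card {j\<in>N11 v n \<delta>. asg s j \<noteq> None}" using I unfolding inv_i_def by (elim conjE) assumption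
  from st show ?thesis
  proof (cases rule: alg_step.cases)
    case (p1_assign a k)
    have pref: "3/4+\<delta> \<le> bval v i (bag s k) \<longrightarrow> a \<in> N11 v n \<delta>"
      using p1_assign iN ai0 by blast
    note c1 = assign_card1[OF p1_assign(3,4,5) finR I9, of "bag s k"]
    note c2 = assign_card2[of "asg s" a k "rem s" "N11 v n \<delta>" n "3/4+\<delta>" "\<lambda>k. bval v i (bag s k)" "bag s k", OF p1_assign(4,5) finN I12 pref]
    show ?thesis unfolding p1_assign(1) inv_i_def st.simps
      using I1 I2 I3 I4 I5 I6 I7 I8 I10 I11 c1 c2 p1_assign by auto
  next
    case p1_end
    have "\<forall>k\<in>rem s. bval v i (bag s k) < 3/4+\<delta>" using p1_end iA ai0 by force
    then show ?thesis unfolding p1_end(1) inv_i_def st.simps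
      using I1 I2 I3 I4 I5 I6 I7 I8 I9 I10 I11 I12 p1_end by auto
  next
    case (p2_select k)
    show ?thesis unfolding p2_select(1) inv_i_def st.simps
      using I1 I2 I3 I4 I5 I6 I7 I8 I9 I10 I11 I12 p2_select by auto
  next
    case (p2_add k g)
    have kR: "k \<in> rem s" using I3 p2_add by blast
    then have kn: "k \<in> {1..n}" using I4 by blast
    have gP: "g \<in> {2*n+1..m}" using I5 p2_add by blast
    have "bag s k \<subseteq> UU n m" using I8 kn by blast
    moreover have "finite (UU n m)" by (simp add: UU_def)
    ultimately have fin: "finite (bag s k)" by (rule finite_subset)
    have gnot: "g \<notin> bag s k" using I7 kn p2_add(5) by blast
    have lt: "bval v i (bag s k) < 3/4+\<delta>" using p2_add(4) iA ai0 by auto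
    have vg: "v i g \<le> v i (2*n+1)" using ord gP iA unfolding ordered_def goods_def by auto
    have "bval v i (bag s k \<union> {g}) = bval v i (bag s k) + v i g"
      unfolding bval_def using fin gnot by simp
    then have new: "bval v i (bag s k \<union> {g}) \<le> max 1 (3/4+\<delta> + v i (2*n+1))"
      using lt vg by linarith
    have e12: "{k'\<in>{1..n} - rem s. 3/4+\<delta> \<le> bval v i (((bag s)(k := bag s k \<union> {g})) k')}
        = {k'\<in>{1..n} - rem s. 3/4+\<delta> \<le> bval v i (bag s k')}" using kR by auto
    have e8: "(\<Union>k'\<in>{1..n}. ((bag s)(k := bag s k \<union> {g})) k') \<union> (pool s - {g})
        = (\<Union>k\<in>{1..n}. bag s k) \<union> pool s" using kn p2_add by auto
    have e6: "\<forall>k1\<in>{1..n}. \<forall>k2\<in>{1..n}. k1 \<noteq> k2 \<longrightarrow>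
        ((bag s)(k := bag s k \<union> {g})) k1 \<inter> ((bag s)(k := bag s k \<union> {g})) k2 = {}"
      using I6 I7 p2_add by auto
    have e7: "\<forall>k1\<in>{1..n}. ((bag s)(k := bag s k \<union> {g})) k1 \<inter> (pool s - {g}) = {}"
      using I7 by auto
    have e10: "\<forall>k1\<in>{1..n}. bval v i (((bag s)(k := bag s k \<union> {g})) k1) \<le> max 1 (3/4+\<delta> + v i (2*n+1))"
      using I10 new by auto
    have e11: "ph s = 2 \<longrightarrow> (\<forall>k1\<in>rem s. cur s \<noteq> Some k1 \<longrightarrow> bval v i (((bag s)(k := bag s k \<union> {g})) k1) < 3/4+\<delta>)"
      using I11 p2_add by auto
    show ?thesis unfolding p2_add(1) inv_i_def st.simps
      using I1 I2 I3 I4 I5 I9 I12 e6 e7 e8 e10 e11 e12 I8 p2_add by auto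
  next
    case (p2_assign k a)
    have pref: "3/4+\<delta> \<le> bval v i (bag s k) \<longrightarrow> a \<in> N11 v n \<delta>"
      using p2_assign iN ai0 by blast
    have kR: "k \<in> rem s" using I3 p2_assign by blast
    note c1 = assign_card1[OF p2_assign(4,5) kR finR I9, of "bag s k"]
    note c2 = assign_card2[of "asg s" a k "rem s" "N11 v n \<delta>" n "3/4+\<delta>" "\<lambda>k. bval v i (bag s k)" "bag s k", OF p2_assign(5) kR finN I12 pref]
    show ?thesis unfolding p2_assign(1) inv_i_def st.simps
      using I1 I2 I3 I4 I5 I6 I7 I8 I10 I11 c1 c2 p2_assign kR by auto
  qed
qed

lemma arith_final:
  fixes n h \<alpha> w \<delta> K :: real
  assumes "n < h * max 1 (\<alpha> + w) + (n - h) * \<alpha>" "0 \<le> h" "h \<le> n" "\<alpha> = 3/4+\<delta>"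
    "\<delta> \<le> 1/4" "3*w < \<alpha>" "1 \<le> K" "h \<le> K" "K \<le> n * (1/4-\<delta>)/(1/4+\<delta>/3)"
  shows False
proof -
  have d: "1/4+\<delta>/3 > 0"
  proof (rule ccontr)
    assume "\<not> 1/4+\<delta>/3 > 0"
    then have "n * (1/4-\<delta>)/(1/4+\<delta>/3) \<le> 0"
      using assms by (intro divide_nonneg_nonpos) auto
    then show False using assms by linarith
  qed
  have "h \<le> n * (1/4-\<delta>)/(1/4+\<delta>/3)" using assms by linarith
  then have hd: "h * (1/4+\<delta>/3) \<le> n * (1/4-\<delta>)" using d by (simp add: pos_le_divide_eq)
  show False
  proof (cases "1 \<ge> \<alpha> + w")
    case True
    then have "max 1 (\<alpha> + w) = 1" by simp
    then have "n < h + (n - h) * \<alpha>" using assms(1) by simp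
    moreover have "(n - h) * \<alpha> \<le> n - h" using mult_left_mono[of \<alpha> 1 "n-h"] assms by auto
    ultimately show False by linarith
  next
    case False
    then have "max 1 (\<alpha> + w) = \<alpha> + w" by simp
    moreover have "h * w \<le> h * (\<alpha>/3)" using assms by (intro mult_left_mono) auto
    ultimately have "n < n * \<alpha> + h * (\<alpha>/3)" using assms(1) by (simp add: algebra_simps)
    also have "h * (\<alpha>/3) = h * (1/4+\<delta>/3)" using assms by simp
    finally show False using hd assms by (simp add: algebra_simps)
  qed
qed

lemma inv_reach:
  assumes "(alg_step v n \<delta>)\<^sup>*\<^sup>* (init_st n m) s" "i \<in> N11 v n \<delta>"
    "ordered v n m" "additive_inst v n m"
  shows "asg s i = None \<Longrightarrow> inv_i v n m \<delta> i s"
  using assms(1)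
proof (induction rule: rtranclp_induct)
  case base
  show ?case using inv_init assms(2) by (auto simp: N11_def)
next
  case (step y z)
  show ?case using inv_step[OF step(2) step(3)[OF asg_back[OF step(2) step(4)]] step(4) assms(2-4)] .
qed

lemma asg_val:
  assumes "(alg_step v n \<delta>)\<^sup>*\<^sup>* (init_st n m) s"
  shows "asg s j = Some B \<Longrightarrow> 3/4+\<delta> \<le> bval v j B"
  using assms
proof (induction arbitrary: B rule: rtranclp_induct)
  case base
  then show ?case by (simp add: init_st_def)
next
  case (step y z)
  from step(2) show ?case
  proof (cases rule: alg_step.cases)
    case (p1_assign a k)
    then show ?thesis using step by (auto split: if_splits)
  next
    case p1_end
    then show ?thesis using step by auto
  next
    case (p2_select k)
    then show ?thesis using step by auto
  next
    case (p2_add k g)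
    then show ?thesis using step by auto
  next
    case (p2_assign k a)
    then show ?thesis using step by (auto split: if_splits)
  qed
qed

lemma final_shape:
  assumes I: "inv_i v n m \<delta> i s" and ai: "asg s i = None" and iA: "i \<in> agents n"
    and fin: "\<not> (\<exists>s'. alg_step v n \<delta> s s')"
    and N11A: "N11 v n \<delta> \<subseteq> agents n"
  shows "\<exists>k. ph s = 2 \<and> cur s = Some k \<and> pool s = {} \<and> bval v i (bag s k) < 3/4+\<delta>"
proof -
  have I1: "ph s = 1 \<or> ph s = 2" using I unfolding inv_i_def by (elim conjE) assumption
  have I9: "card {j\<in>agents n. asg s j = None} = card (rem s)" using I unfolding inv_i_def by (elim conjE) assumption
  have I3: "\<forall>k. cur s = Some k \<longrightarrow> k \<in> rem s" using I unfolding inv_i_def by (elim conjE) assumption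
  show ?thesis
  proof (cases "ph s = 1")
    case ph1: True
    show ?thesis
    proof (cases "\<exists>j\<in>agents n. \<exists>k\<in>rem s. asg s j = None \<and> 3/4+\<delta> \<le> bval v j (bag s k)")
      case True
      then obtain j k where jk: "j \<in> agents n" "k \<in> rem s" "asg s j = None" "3/4+\<delta> \<le> bval v j (bag s k)"
        by blast
      show ?thesis
      proof (cases "\<exists>j'\<in>N11 v n \<delta>. asg s j' = None \<and> bval v j' (bag s k) \<ge> 3/4 + \<delta>")
        case True
        then obtain j' where j': "j' \<in> N11 v n \<delta>" "asg s j' = None" "bval v j' (bag s k) \<ge> 3/4 + \<delta>" by blast
        have "alg_step v n \<delta> s (s\<lparr>asg := (asg s)(j' := Some (bag s k)), rem := rem s - {k}\<rparr>)"
          using j' jk ph1 N11A by (intro alg_step.p1_assign) auto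
        then show ?thesis using fin by blast
      next
        case False
        have "alg_step v n \<delta> s (s\<lparr>asg := (asg s)(j := Some (bag s k)), rem := rem s - {k}\<rparr>)"
          using False jk ph1 by (intro alg_step.p1_assign) auto
        then show ?thesis using fin by blast
      qed
    next
      case False
      have "alg_step v n \<delta> s (s\<lparr>ph := 2\<rparr>)" using False ph1 by (intro alg_step.p1_end) auto
      then show ?thesis using fin by blast
    qed
  next
    case False
    then have ph2: "ph s = 2" using I1 by simp
    show ?thesis
    proof (cases "cur s")
      case None
      have "i \<in> {j\<in>agents n. asg s j = None}" using iA ai by simp
      moreover have "finite {j\<in>agents n. asg s j = None}" by (simp add: agents_def)
      ultimately have "card {j\<in>agents n. asg s j = None} > 0" by (auto simp: card_gt_0_iff)
      then have "rem s \<noteq> {}" using I9 by auto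
      then obtain k where "k \<in> rem s" by blast
      then have "alg_step v n \<delta> s (s\<lparr>cur := Some k\<rparr>)" using None ph2 by (intro alg_step.p2_select) auto
      then show ?thesis using fin by blast
    next
      case (Some k)
      show ?thesis
      proof (cases "\<exists>j\<in>agents n. asg s j = None \<and> 3/4+\<delta> \<le> bval v j (bag s k)")
        case True
        then obtain j where jk: "j \<in> agents n" "asg s j = None" "3/4+\<delta> \<le> bval v j (bag s k)"
          by blast
        show ?thesis
        proof (cases "\<exists>j'\<in>N11 v n \<delta>. asg s j' = None \<and> bval v j' (bag s k) \<ge> 3/4 + \<delta>")
          case True
          then obtain j' where j': "j' \<in> N11 v n \<delta>" "asg s j' = None" "bval v j' (bag s k) \<ge> 3/4 + \<delta>" by blast
          have "alg_step v n \<delta> s (s\<lparr>asg := (asg s)(j' := Some (bag s k)), rem := rem s - {k}, cur := None\<rparr>)"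
            using j' jk ph2 Some N11A by (intro alg_step.p2_assign) auto
          then show ?thesis using fin by blast
        next
          case False
          have "alg_step v n \<delta> s (s\<lparr>asg := (asg s)(j := Some (bag s k)), rem := rem s - {k}, cur := None\<rparr>)"
            using False jk ph2 Some by (intro alg_step.p2_assign) auto
          then show ?thesis using fin by blast
        qed
      next
        case nq: False
        show ?thesis
        proof (cases "pool s = {}")
          case True
          have "bval v i (bag s k) < 3/4+\<delta>" using nq iA ai by auto
          then show ?thesis using True ph2 Some by blast
        next
          case False
          then obtain g where "g \<in> pool s" by blast
          then have "alg_step v n \<delta> s (s\<lparr>bag := (bag s)(k := bag s k \<union> {g}), pool := pool s - {g}\<rparr>)"
            using nq ph2 Some by (intro alg_step.p2_add) auto
          then show ?thesis using fin by blast
        qed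
      qed
    qed
  qed
qed

lemma norm_facts:
  assumes "normalized v n m" "additive_inst v n m" "i \<in> agents n"
  shows "bval v i (goods m) = real n" "MMS v n m i = 1"
proof -
  obtain P where P: "is_partition n m P" "min_bundle v n i P = MMS v n m i"
    "\<forall>j\<in>{1..n}. bval v i (P j) = 1"
    using assms unfolding normalized_def by blast
  have n1: "n \<ge> 1" using assms(3) by (simp add: agents_def)
  have U: "goods m = (\<Union>j\<in>{1..n}. P j)" using P(1) unfolding is_partition_def by simp
  have finP: "\<forall>j\<in>{1..n}. finite (P j)"
  proof
    fix j assume "j \<in> {1..n}"
    then have "P j \<subseteq> goods m" using U by blast
    then show "finite (P j)" by (rule finite_subset) (simp add: goods_def)
  qed
  have "bval v i (goods m) = (\<Sum>j\<in>{1..n}. bval v i (P j))"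
    unfolding U bval_def
    by (rule sum.UNION_disjoint) (use finP P(1) in \<open>auto simp: is_partition_def\<close>)
  also have "\<dots> = real n" using P(3) by simp
  finally show "bval v i (goods m) = real n" .
  have "(\<lambda>j. bval v i (P j)) ` {1..n} = {1}" using P(3) n1 by force
  then have "min_bundle v n i P = 1" unfolding min_bundle_def by simp
  then show "MMS v n m i = 1" using P(2) by simp
qed

lemma UU_val:
  assumes "additive_inst v n m" "i \<in> agents n"
  shows "bval v i (UU n m) = bval v i (goods m)"
  unfolding bval_def
proof (rule sum.mono_neutral_right)
  show "finite (UU n m)" by (simp add: UU_def)
  show "goods m \<subseteq> UU n m" by (auto simp: UU_def goods_def)
  show "\<forall>g\<in>UU n m - goods m. v i g = 0" using assms by (auto simp: additive_inst_def goods_def UU_def)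
qed

lemma w_bound:
  assumes "ONI \<delta> v n m" "i \<in> agents n"
  shows "3 * v i (2*n+1) < 3/4+\<delta>" "0 \<le> v i (2*n+1)"
proof -
  have n1: "n \<ge> 1" using assms(2) by (simp add: agents_def)
  have add: "additive_inst v n m" and ord: "ordered v n m" and irr: "irreducible (3/4+\<delta>) v n"
    using assms(1) by (auto simp: ONI_def)
  have nn: "\<And>g. 0 \<le> v i g" using add assms(2) by (auto simp: additive_inst_def)
  show "0 \<le> v i (2*n+1)" by (rule nn)
  have "bval v i {2*n-1, 2*n, 2*n+1} = v i (2*n-1) + v i (2*n) + v i (2*n+1)"
  proof -
    have d: "2*n-1 \<noteq> 2*n" "2*n-1 \<noteq> 2*n+1" "2*n \<noteq> 2*n+1" using n1 by auto
    show ?thesis unfolding bval_def using d by simp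
  qed
  moreover have "v i (2*n+1) \<le> v i (2*n-1) \<and> v i (2*n+1) \<le> v i (2*n)"
  proof (cases "2*n+1 \<le> m")
    case True
    have o: "\<forall>g\<in>{1..m}. \<forall>g'\<in>{1..m}. g \<le> g' \<longrightarrow> v i g' \<le> v i g"
      using ord assms(2) unfolding ordered_def goods_def by blast
    have "2*n-1 \<in> {1..m}" "2*n \<in> {1..m}" "2*n+1 \<in> {1..m}" using True n1 by auto
    then show ?thesis using o by auto
  next
    case False
    then have "v i (2*n+1) = 0" using add assms(2) by (auto simp: additive_inst_def)
    then show ?thesis using nn by simp
  qed
  moreover have "bval v i {2*n-1, 2*n, 2*n+1} < 3/4+\<delta>"
    using irr assms(2) by (auto simp: irreducible_def)
  ultimately show "3 * v i (2*n+1) < 3/4+\<delta>" by linarith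
qed

lemma count_contra:
  assumes I: "inv_i v n m \<delta> i s" and ph2: "ph s = 2" and ck: "cur s = Some k" and pe: "pool s = {}"
    and lt: "bval v i (bag s k) < 3/4+\<delta>" and iN: "i \<in> N11 v n \<delta>" and oni: "ONI \<delta> v n m"
    and dl: "\<delta> \<le> 1/4"
    and cb: "real (card (N11 v n \<delta>)) \<le> real n * (1/4 - \<delta>) / (1/4 + \<delta>/3)"
  shows False
proof -
  have iA: "i \<in> agents n" using iN by (auto simp: N11_def N1_def)
  have add: "additive_inst v n m" and norm: "normalized v n m" using oni by (auto simp: ONI_def)
  have finN: "finite (N11 v n \<delta>)"
    by (rule finite_subset[of _ "agents n"]) (auto simp: N11_def N1_def agents_def)
  have I3: "\<forall>k. cur s = Some k \<longrightarrow> k \<in> rem s" using I unfolding inv_i_def by (elim conjE) assumption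
  have I4: "rem s \<subseteq> {1..n}" using I unfolding inv_i_def by (elim conjE) assumption
  have I6: "\<forall>k\<in>{1..n}. \<forall>k'\<in>{1..n}. k \<noteq> k' \<longrightarrow> bag s k \<inter> bag s k' = {}" using I unfolding inv_i_def by (elim conjE) assumption
  have I8: "(\<Union>k\<in>{1..n}. bag s k) \<union> pool s = UU n m" using I unfolding inv_i_def by (elim conjE) assumption
  have I10: "\<forall>k\<in>{1..n}. bval v i (bag s k) \<le> max 1 (3/4+\<delta> + v i (2*n+1))" using I unfolding inv_i_def by (elim conjE) assumption
  have I11: "ph s = 2 \<longrightarrow> (\<forall>k\<in>rem s. cur s \<noteq> Some k \<longrightarrow> bval v i (bag s k) < 3/4+\<delta>)" using I unfolding inv_i_def by (elim conjE) assumption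
  have I12: "card {k\<in>{1..n} - rem s. 3/4+\<delta> \<le> bval v i (bag s k)} \<le> card {j\<in>N11 v n \<delta>. asg s j \<noteq> None}" using I unfolding inv_i_def by (elim conjE) assumption
  have kR: "k \<in> rem s" using I3 ck by blast
  then have kn: "k \<in> {1..n}" using I4 by blast
  have U: "(\<Union>k\<in>{1..n}. bag s k) = UU n m" using I8 pe by simp
  have finB: "\<forall>k\<in>{1..n}. finite (bag s k)"
  proof
    fix k assume "k \<in> {1..n}"
    then have "bag s k \<subseteq> UU n m" using U by blast
    then show "finite (bag s k)" by (rule finite_subset) (simp add: UU_def)
  qed
  have "bval v i (UU n m) = (\<Sum>k\<in>{1..n}. bval v i (bag s k))"
    unfolding U[symmetric] bval_def
    by (rule sum.UNION_disjoint) (use finB I6 in auto)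
  moreover have "bval v i (UU n m) = real n"
    using UU_val[OF add iA] norm_facts(1)[OF norm add iA] by simp
  ultimately have tot: "(\<Sum>k\<in>{1..n}. bval v i (bag s k)) = real n" by simp
  define H where "H = {k'\<in>{1..n}. 3/4+\<delta> \<le> bval v i (bag s k')}"
  have HS: "H \<subseteq> {1..n}" unfolding H_def by auto
  have "H \<subseteq> {k\<in>{1..n} - rem s. 3/4+\<delta> \<le> bval v i (bag s k)}"
  proof
    fix k' assume k': "k' \<in> H"
    have "k' \<notin> rem s"
    proof
      assume r: "k' \<in> rem s"
      show False
      proof (cases "k' = k")
        case True then show False using k' lt unfolding H_def by auto
      next
        case False then show False using k' r I11 ph2 ck unfolding H_def by force
      qed
    qed
    then show "k' \<in> {k\<in>{1..n} - rem s. 3/4+\<delta> \<le> bval v i (bag s k)}" using k' unfolding H_def by auto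
  qed
  then have "card H \<le> card {k\<in>{1..n} - rem s. 3/4+\<delta> \<le> bval v i (bag s k)}"
    by (intro card_mono) auto
  also have "\<dots> \<le> card {j\<in>N11 v n \<delta>. asg s j \<noteq> None}" by (rule I12)
  also have "\<dots> \<le> card (N11 v n \<delta>)" using finN by (intro card_mono) auto
  finally have hK: "card H \<le> card (N11 v n \<delta>)" .
  have K1: "card (N11 v n \<delta>) \<ge> 1" using iN finN by (metis One_nat_def Suc_leI card_gt_0_iff empty_iff)
  have hn: "card H \<le> n" using card_mono[OF _ HS] by simp
  have split: "(\<Sum>k\<in>{1..n}. bval v i (bag s k)) = (\<Sum>k\<in>{1..n} - H. bval v i (bag s k)) + (\<Sum>k\<in>H. bval v i (bag s k))"
    using HS by (intro sum.subset_diff) auto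
  have s1: "(\<Sum>k\<in>H. bval v i (bag s k)) \<le> real (card H) * max 1 (3/4+\<delta> + v i (2*n+1))"
    using I10 HS by (intro sum_bounded_above) auto
  have "(\<Sum>k\<in>{1..n} - H. bval v i (bag s k)) < (\<Sum>k\<in>{1..n} - H. 3/4+\<delta>)"
  proof (rule sum_strict_mono_ex1)
    show "finite ({1..n} - H)" by simp
    show "\<forall>x\<in>{1..n} - H. bval v i (bag s x) \<le> 3/4+\<delta>" unfolding H_def by auto
    show "\<exists>a\<in>{1..n} - H. bval v i (bag s a) < 3/4+\<delta>" using kn lt unfolding H_def by auto
  qed
  also have "\<dots> = real (card ({1..n} - H)) * (3/4+\<delta>)" by simp
  also have "card ({1..n} - H) = n - card H" using HS by (simp add: card_Diff_subset finite_subset)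
  finally have s2: "(\<Sum>k\<in>{1..n} - H. bval v i (bag s k)) < (real n - real (card H)) * (3/4+\<delta>)"
    using hn by (simp add: of_nat_diff)
  have main: "real n < real (card H) * max 1 ((3/4+\<delta>) + v i (2*n+1)) + (real n - real (card H)) * (3/4+\<delta>)"
    using tot split s1 s2 by linarith
  show False
    apply (rule arith_final[OF main _ _ refl dl w_bound(1)[OF oni iA], of "real (card (N11 v n \<delta>))"])
    using hn hK K1 cb by auto
qed

theorem lemma22:
  fixes v :: "nat \<Rightarrow> nat \<Rightarrow> real" and n m :: nat and \<delta> :: real and s :: st
  assumes "\<delta> \<le> 1/4"
    and "ONI \<delta> v n m"
    and "real (card (N11 v n \<delta>)) \<le> real n * (1/4 - \<delta>) / (1/4 + \<delta>/3)"
    and "final_state v n m \<delta> s"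
  shows "\<forall>i\<in>N11 v n \<delta>. \<exists>B. asg s i = Some B \<and> bval v i B \<ge> (3/4 + \<delta>) * MMS v n m i"
proof
  fix i assume iN: "i \<in> N11 v n \<delta>"
  have iA: "i \<in> agents n" using iN by (auto simp: N11_def N1_def)
  have add: "additive_inst v n m" and norm: "normalized v n m" and ord: "ordered v n m"
    using assms(2) by (auto simp: ONI_def)
  have reach: "(alg_step v n \<delta>)\<^sup>*\<^sup>* (init_st n m) s" and fin: "\<not> (\<exists>s'. alg_step v n \<delta> s s')"
    using assms(4) by (auto simp: final_state_def)
  have N11A: "N11 v n \<delta> \<subseteq> agents n" by (auto simp: N11_def N1_def)
  have "asg s i \<noteq> None"
  proof
    assume ai: "asg s i = None"
    have I: "inv_i v n m \<delta> i s" using inv_reach[OF reach iN ord add ai] .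
    obtain k where k: "ph s = 2" "cur s = Some k" "pool s = {}" "bval v i (bag s k) < 3/4+\<delta>"
      using final_shape[OF I ai iA fin N11A] by blast
    show False using count_contra[OF I k iN assms(2) assms(1) assms(3)] .
  qed
  then obtain B where B: "asg s i = Some B" by blast
  have "3/4+\<delta> \<le> bval v i B" using asg_val[OF reach B] .
  then show "\<exists>B. asg s i = Some B \<and> bval v i B \<ge> (3/4 + \<delta>) * MMS v n m i"
    using B norm_facts(2)[OF norm add iA] by simp
qed

end
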